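(* For every message $M$ and formulas $\phi,\psi$: $\vdash(\langle M\rangle\phi\to[M]\psi)\to[M](\phi\to\psi)$.
   Context: Fix a finite set $\mathcal{A}$ of agent names containing a distinguished name $\mathsf{CM}$. Messages: $M ::= a \mid B \mid (M,M)$ ($a\in\mathcal{A}$, $B$ optional data constants, pairs). $\mathcal{P}$ is a denumerable set of propositional variables containing atoms $\mathsf{k}_a(M)$ ("$a$ knows $M$"). Formulas: $\phi ::= P \mid \phi\wedge\phi \mid \phi\vee\phi \mid \neg\phi \mid \phi\to\phi \mid [M]\phi$. Abbreviations: $\mathrm{true}:=\mathsf{k}_{\mathsf{CM}}(\mathsf{CM})$, $\mathrm{false}:=\neg\mathrm{true}$, $\phi\leftrightarrow\psi:=(\phi\to\psi)\wedge(\psi\to\phi)$, $\langle M\rangle\phi:=\neg\neg(\mathsf{k}_{\mathsf{CM}}(M)\wedge\phi)$. LIiP is the smallest set of formulas containing all instances of: the axioms of an adequate Hilbert axiomatization of intuitionistic propositional logic; $\mathsf{k}_a(a)$; $(\mathsf{k}_a(M)\wedge\mathsf{k}_a(M'))\leftrightarrow\mathsf{k}_a((M,M'))$; $[M]\mathsf{k}_{\mathsf{CM}}(M)$; $[M](\phi\to\psi)\to([M]\phi\to[M]\psi)$; $[M]\phi\to(\mathsf{k}_{\mathsf{CM}}(M)\to\phi)$; $[M]\phi\to\langle M\rangle\phi$; $\phi\to[M]\phi$; and closed under modus ponens and the rule: if $\mathsf{k}_{\mathsf{CM}}(M)\to\mathsf{k}_{\mathsf{CM}}(M')$ is in the set then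 so is $[M']\phi\to[M]\phi$ for every $\phi$. Write $\vdash\phi$ for $\phi\in\mathrm{LIiP}$. *)

theory Defs
  imports Main
begin

datatype ('ag, 'd) msg = Ag 'ag | Dat 'd | MPair "('ag, 'd) msg" "('ag, 'd) msg"

text \<open>Formulas. Propositional variables are either knowledge atoms k_a(M)
  or further (other) propositional variables of type 'p.\<close>
datatype ('ag, 'd, 'p) fm =
    PVar 'p
  | K 'ag "('ag, 'd) msg"
  | Conj "('ag, 'd, 'p) fm" "('ag, 'd, 'p) fm"
  | Disj "('ag, 'd, 'p) fm" "('ag, 'd, 'p) fm"
  | Neg "('ag, 'd, 'p) fm"
  | Imp "('ag, 'd, 'p) fm" "('ag, 'd, 'p) fm"
  | Box "('ag, 'd) msg" "('ag, 'd, 'p) fm"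

definition TT :: "'ag \<Rightarrow> ('ag, 'd, 'p) fm" where
  "TT cm = K cm (Ag cm)"

definition FF :: "'ag \<Rightarrow> ('ag, 'd, 'p) fm" where
  "FF cm = Neg (TT cm)"

definition Iff :: "('ag, 'd, 'p) fm \<Rightarrow> ('ag, 'd, 'p) fm \<Rightarrow> ('ag, 'd, 'p) fm" where
  "Iff a b = Conj (Imp a b) (Imp b a)"

definition Dia :: "'ag \<Rightarrow> ('ag, 'd) msg \<Rightarrow> ('ag, 'd, 'p) fm \<Rightarrow> ('ag, 'd, 'p) fm" where
  "Dia cm M a = Neg (Neg (Conj (K cm M) a))"

text \<open>LIiP, parametrised by the distinguished agent cm (CM).
  Intuitionistic propositional part: a standard adequate Hilbert system
  with primitive negation.\<close>
inductive LIiP :: "'ag \<Rightarrow> ('ag, 'd, 'p) fm \<Rightarrow> bool" for cm :: 'ag where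
  ax_K: "LIiP cm (Imp a (Imp b a))"
| ax_S: "LIiP cm (Imp (Imp a (Imp b c)) (Imp (Imp a b) (Imp a c)))"
| ax_conjI: "LIiP cm (Imp a (Imp b (Conj a b)))"
| ax_conjE1: "LIiP cm (Imp (Conj a b) a)"
| ax_conjE2: "LIiP cm (Imp (Conj a b) b)"
| ax_disjI1: "LIiP cm (Imp a (Disj a b))"
| ax_disjI2: "LIiP cm (Imp b (Disj a b))"
| ax_disjE: "LIiP cm (Imp (Imp a c) (Imp (Imp b c) (Imp (Disj a b) c)))"
| ax_negI: "LIiP cm (Imp (Imp a b) (Imp (Imp a (Neg b)) (Neg a)))"
| ax_negE: "LIiP cm (Imp (Neg a) (Imp a b))"
| ax_know_self: "LIiP cm (K ag (Ag ag))"
| ax_know_pair: "LIiP cm (Iff (Conj (K ag M) (K ag M')) (K ag (MPair M M')))"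
| ax_box_know: "LIiP cm (Box M (K cm M))"
| ax_box_K: "LIiP cm (Imp (Box M (Imp a b)) (Imp (Box M a) (Box M b)))"
| ax_box_T: "LIiP cm (Imp (Box M a) (Imp (K cm M) a))"
| ax_box_dia: "LIiP cm (Imp (Box M a) (Dia cm M a))"
| ax_box_intro: "LIiP cm (Imp a (Box M a))"
| mp: "LIiP cm (Imp a b) \<Longrightarrow> LIiP cm a \<Longrightarrow> LIiP cm b"
| mono: "LIiP cm (Imp (K cm M) (K cm M')) \<Longrightarrow> LIiP cm (Imp (Box M' a) (Box M a))"

end

theory Submission
  imports Defs
begin

inductive der :: "'ag \<Rightarrow> ('ag, 'd, 'p) fm set \<Rightarrow> ('ag, 'd, 'p) fm \<Rightarrow> bool" for cm where
  hyp: "a \<in> G \<Longrightarrow> der cm G a"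
| thmI: "LIiP cm a \<Longrightarrow> der cm G a"
| dmp: "der cm G (Imp a b) \<Longrightarrow> der cm G a \<Longrightarrow> der cm G b"

lemma id_thm: "LIiP cm (Imp a a)"
proof -
  have 1: "LIiP cm (Imp (Imp a (Imp (Imp a a) a)) (Imp (Imp a (Imp a a)) (Imp a a)))"
    by (rule LIiP.ax_S)
  have 2: "LIiP cm (Imp (Imp a (Imp a a)) (Imp a a))"
    using LIiP.mp[OF 1 LIiP.ax_K] .
  show ?thesis using LIiP.mp[OF 2 LIiP.ax_K] .
qed

lemma deduction: "der cm G a \<Longrightarrow> G = insert h H \<Longrightarrow> der cm H (Imp h a)"
proof (induction rule: der.induct)
  case (hyp a G)
  show ?case
  proof (cases "a = h")
    case True then show ?thesis using der.thmI[OF id_thm[of cm h]] by simp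
  next
    case False
    then have "a \<in> H" using hyp by auto
    then have x: "der cm H a" by (rule der.hyp)
    have k: "der cm H (Imp a (Imp h a))" by (rule der.thmI, rule LIiP.ax_K)
    show ?thesis by (rule der.dmp[OF k x])
  qed
next
  case (thmI a G)
  have x: "der cm H a" using thmI(1) by (rule der.thmI)
  have k: "der cm H (Imp a (Imp h a))" by (rule der.thmI, rule LIiP.ax_K)
  show ?case by (rule der.dmp[OF k x])
next
  case (dmp G a b)
  have 1: "der cm H (Imp h (Imp a b))" using dmp.IH(1)[OF dmp.prems] .
  have 2: "der cm H (Imp h a)" using dmp.IH(2)[OF dmp.prems] .
  show ?case by (rule der.dmp[OF der.dmp[OF der.thmI[OF LIiP.ax_S] 1] 2])
qed

lemma ded: assumes "der cm (insert h H) a" shows "der cm H (Imp h a)"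
  by (rule deduction[OF assms refl])

lemma der_empty: "der cm G a \<Longrightarrow> G = {} \<Longrightarrow> LIiP cm a"
proof (induction rule: der.induct)
  case (hyp a G) then show ?case by simp
next
  case (thmI a G) then show ?case by simp
next
  case (dmp G a b)
  have 1: "LIiP cm (Imp a b)" using dmp.IH(1)[OF dmp.prems] .
  have 2: "LIiP cm a" using dmp.IH(2)[OF dmp.prems] .
  show ?case by (rule LIiP.mp[OF 1 2])
qed

lemma dneg: "der cm G c \<Longrightarrow> der cm G (Neg (Neg c))"
proof -
  assume c: "der cm G c"
  have k: "der cm G (Imp c (Imp (Neg c) c))" by (rule der.thmI, rule LIiP.ax_K)
  have a: "der cm G (Imp (Neg c) c)" by (rule der.dmp[OF k c])
  have b: "der cm G (Imp (Neg c) (Neg c))" by (rule der.thmI, rule id_thm)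
  have n: "der cm G (Imp (Imp (Neg c) c) (Imp (Imp (Neg c) (Neg c)) (Neg (Neg c))))"
    by (rule der.thmI, rule LIiP.ax_negI)
  have n2: "der cm G (Imp (Imp (Neg c) (Neg c)) (Neg (Neg c)))" by (rule der.dmp[OF n a])
  show ?thesis by (rule der.dmp[OF n2 b])
qed

theorem theorem2p46:
  fixes cm :: "'ag::finite" and M :: "('ag, 'd) msg" and \<phi> \<psi> :: "('ag, 'd, 'p) fm"
  shows "LIiP cm (Imp (Imp (Dia cm M \<phi>) (Box M \<psi>)) (Box M (Imp \<phi> \<psi>)))"
proof -
  define X where "X = Imp (Dia cm M \<phi>) (Box M \<psi>)"
  define G where "G = {\<phi>, X, K cm M}"
  have k: "der cm G (K cm M)" unfolding G_def by (rule der.hyp) simp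
  have p: "der cm G \<phi>" unfolding G_def by (rule der.hyp) simp
  have x: "der cm G (Imp (Dia cm M \<phi>) (Box M \<psi>))" unfolding G_def X_def by (rule der.hyp) simp
  have ci: "der cm G (Imp (K cm M) (Imp \<phi> (Conj (K cm M) \<phi>)))" by (rule der.thmI, rule LIiP.ax_conjI)
  have ci2: "der cm G (Imp \<phi> (Conj (K cm M) \<phi>))" by (rule der.dmp[OF ci k])
  have kp: "der cm G (Conj (K cm M) \<phi>)" by (rule der.dmp[OF ci2 p])
  have d: "der cm G (Dia cm M \<phi>)" unfolding Dia_def by (rule dneg[OF kp])
  have bp: "der cm G (Box M \<psi>)" by (rule der.dmp[OF x d])
  have bt: "der cm G (Imp (Box M \<psi>) (Imp (K cm M) \<psi>))" by (rule der.thmI, rule LIiP.ax_box_T)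
  have bt2: "der cm G (Imp (K cm M) \<psi>)" by (rule der.dmp[OF bt bp])
  have ps: "der cm G \<psi>" by (rule der.dmp[OF bt2 k])
  have G': "G = insert \<phi> {X, K cm M}" unfolding G_def by simp
  have t1: "der cm {X, K cm M} (Imp \<phi> \<psi>)" by (rule ded, fact ps[unfolded G'])
  have t2: "der cm {K cm M} (Imp X (Imp \<phi> \<psi>))" by (rule ded, fact t1)
  have t3: "der cm {} (Imp (K cm M) (Imp X (Imp \<phi> \<psi>)))" by (rule ded, fact t2)
  have t: "LIiP cm (Imp (K cm M) (Imp X (Imp \<phi> \<psi>)))" by (rule der_empty[OF t3 refl])
  have bt: "LIiP cm (Box M (Imp (K cm M) (Imp X (Imp \<phi> \<psi>))))"
    by (rule LIiP.mp[OF LIiP.ax_box_intro t])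
  have bk: "LIiP cm (Imp (Box M (K cm M)) (Box M (Imp X (Imp \<phi> \<psi>))))"
    by (rule LIiP.mp[OF LIiP.ax_box_K bt])
  have b2: "LIiP cm (Box M (Imp X (Imp \<phi> \<psi>)))"
    by (rule LIiP.mp[OF bk LIiP.ax_box_know])
  have b3: "LIiP cm (Imp (Box M X) (Box M (Imp \<phi> \<psi>)))"
    by (rule LIiP.mp[OF LIiP.ax_box_K b2])
  have h: "der cm {X} X" by (rule der.hyp) simp
  have bi: "der cm {X} (Imp X (Box M X))" by (rule der.thmI, rule LIiP.ax_box_intro)
  have b3': "der cm {X} (Imp (Box M X) (Box M (Imp \<phi> \<psi>)))" by (rule der.thmI[OF b3])
  have bx: "der cm {X} (Box M X)" by (rule der.dmp[OF bi h])
  have f: "der cm {X} (Box M (Imp \<phi> \<psi>))" by (rule der.dmp[OF b3' bx])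
  have "der cm {} (Imp X (Box M (Imp \<phi> \<psi>)))" by (rule ded, fact f)
  then have "LIiP cm (Imp X (Box M (Imp \<phi> \<psi>)))" by (rule der_empty) (rule refl)
  then show ?thesis unfolding X_def .
qed

end
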